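(* Let $(\beta,\gamma)$ be antiferromagnetic, let $I\subset(0,\infty)$ be a closed interval, let $k\geq1$, and let $R_1(\lambda),\dots,R_k(\lambda)$ and $Q_0(\lambda)$ be twice continuously differentiable functions from $I$ to $(\gamma,1/\beta)$. Let $\mathcal{F}$ be the family of functions $Q_m:I\to(\gamma,1/\beta)$ obtained, for all $m\geq0$ and all sequences $a_0,\dots,a_{m-1}\in[k]$, by $$Q_{i+1}(\lambda)=\frac{1+\gamma\lambda R_{a_i}(\lambda)Q_i(\lambda)}{\beta+\lambda R_{a_i}(\lambda)Q_i(\lambda)},\qquad i=0,\dots,m-1.$$ Then there exist bounded intervals $I_1,I_2$ such that for every $\lambda\in I$ and every $Q\in\mathcal{F}$ we have $Q'(\lambda)\in I_1$ and $Q''(\lambda)\in I_2$.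
   Context: A pair $(\beta,\gamma)$ with $\beta,\gamma\geq0$ is antiferromagnetic if $\beta\gamma\in[0,1)$ and at least one is nonzero; when $\beta=0$, $1/\beta=+\infty$. *)

theory Defs
  imports "HOL-Analysis.Analysis"
begin

definition antiferromagnetic :: "real \<Rightarrow> real \<Rightarrow> bool" where
  "antiferromagnetic \<beta> \<gamma> \<longleftrightarrow> \<beta> \<ge> 0 \<and> \<gamma> \<ge> 0 \<and> \<beta> * \<gamma> < 1 \<and> (\<beta> \<noteq> 0 \<or> \<gamma> \<noteq> 0)"

text \<open>Membership in the open interval (gamma, 1/beta), where 1/beta = +infinity if beta = 0.\<close>
definition in_range :: "real \<Rightarrow> real \<Rightarrow> real \<Rightarrow> bool" where
  "in_range \<beta> \<gamma> x \<longleftrightarrow> \<gamma> < x \<and> (\<beta> = 0 \<or> x < 1 / \<beta>)"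

definition C2_on :: "real set \<Rightarrow> (real \<Rightarrow> real) \<Rightarrow> bool" where
  "C2_on I f \<longleftrightarrow> (\<exists>f1 f2. (\<forall>x\<in>I. (f has_real_derivative f1 x) (at x within I)
        \<and> (f1 has_real_derivative f2 x) (at x within I)) \<and> continuous_on I f2)"

inductive_set fam :: "real \<Rightarrow> real \<Rightarrow> nat \<Rightarrow> (nat \<Rightarrow> real \<Rightarrow> real) \<Rightarrow> (real \<Rightarrow> real) \<Rightarrow> (real \<Rightarrow> real) set"
  for \<beta> \<gamma> :: real and k :: nat and R :: "nat \<Rightarrow> real \<Rightarrow> real" and Q0 :: "real \<Rightarrow> real" where
  base: "Q0 \<in> fam \<beta> \<gamma> k R Q0"
| step: "Q \<in> fam \<beta> \<gamma> k R Q0 \<Longrightarrow> a \<in> {1..k} \<Longrightarrow>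
     (\<lambda>l. (1 + \<gamma> * l * R a l * Q l) / (\<beta> + l * R a l * Q l)) \<in> fam \<beta> \<gamma> k R Q0"

end

theory Submission
  imports Defs
begin

lemma f_mono:
  fixes \<beta> \<gamma> y z :: real
  assumes "\<beta> \<ge> 0" "\<gamma> \<ge> 0" "\<beta>*\<gamma> < 1" "0 < y" "y \<le> z"
  shows "(1+\<gamma>*z)/(\<beta>+z) \<le> (1+\<gamma>*y)/(\<beta>+y)"
proof -
  have "(1+\<gamma>*z)*(\<beta>+y) \<le> (1+\<gamma>*y)*(\<beta>+z)"
  proof -
    have "(1+\<gamma>*y)*(\<beta>+z) - (1+\<gamma>*z)*(\<beta>+y) = (z-y)*(1-\<gamma>*\<beta>)" by (simp add: algebra_simps)
    moreover have "(z-y)*(1-\<gamma>*\<beta>) \<ge> 0" using assms by (simp add: mult.commute)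
    ultimately show ?thesis by linarith
  qed
  thus ?thesis using assms by (simp add: divide_simps)
qed

lemma cont_bound:
  fixes g :: "real \<Rightarrow> real"
  assumes "continuous_on {a..b} g"
  shows "\<exists>B. \<forall>x\<in>{a..b}. \<bar>g x\<bar> \<le> B"
proof -
  have "bounded (g ` {a..b})" using compact_continuous_image[OF assms compact_Icc] compact_imp_bounded by blast
  then obtain B where "\<forall>y\<in>g ` {a..b}. norm y \<le> B" unfolding Elementary_Metric_Spaces.bounded_iff by blast
  thus ?thesis by auto
qed

lemma deriv_cont:
  assumes "\<forall>x\<in>S. (f has_real_derivative f1 x) (at x within S)"
  shows "continuous_on S f"
  using assms DERIV_continuous continuous_on_eq_continuous_within by blast

lemma finite_bound:
  fixes g :: "'j \<Rightarrow> real \<Rightarrow> real"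
  assumes "finite S" "\<forall>j\<in>S. \<exists>B. \<forall>x\<in>I. g j x \<le> B"
  shows "\<exists>B. \<forall>j\<in>S. \<forall>x\<in>I. g j x \<le> B"
  using assms
proof (induction S rule: finite_induct)
  case empty
  then show ?case by auto
next
  case (insert j S)
  then obtain B1 where "\<forall>j\<in>S. \<forall>x\<in>I. g j x \<le> B1" by auto
  moreover obtain B2 where "\<forall>x\<in>I. g j x \<le> B2" using insert by auto
  ultimately show ?case by (intro exI[of _ "max B1 B2"]) fastforce
qed

lemma finite_pos:
  fixes g :: "'j \<Rightarrow> real \<Rightarrow> real"
  assumes "finite S" "\<forall>j\<in>S. \<exists>e>0. \<forall>x\<in>I. e \<le> g j x"
  shows "\<exists>e>0. \<forall>j\<in>S. \<forall>x\<in>I. e \<le> g j x"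
  using assms
proof (induction S rule: finite_induct)
  case empty
  then show ?case by (auto intro: exI[of _ 1])
next
  case (insert j S)
  then obtain e1 where "e1 > 0" "\<forall>j\<in>S. \<forall>x\<in>I. e1 \<le> g j x" by auto
  moreover obtain e2 where "e2 > 0" "\<forall>x\<in>I. e2 \<le> g j x" using insert by auto
  ultimately show ?case by (intro exI[of _ "min e1 e2"]) fastforce
qed

lemma pos_min:
  fixes g :: "real \<Rightarrow> real"
  assumes "continuous_on {a..b} g" "a \<le> b" "\<And>x. x \<in> {a..b} \<Longrightarrow> c < g x"
  shows "\<exists>e>0. \<forall>x\<in>{a..b}. c + e \<le> g x"
proof -
  obtain x0 where "x0 \<in> {a..b}" "\<forall>y\<in>{a..b}. g x0 \<le> g y"
    using continuous_attains_inf[OF compact_Icc _ assms(1)] assms(2) by auto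
  thus ?thesis using assms(3)[of x0] by (intro exI[of _ "g x0 - c"]) auto
qed

lemma ident1a:
  fixes \<beta> \<gamma> y y1 d e :: real
  assumes "y \<noteq> 0" "d \<noteq> 0" "e \<noteq> 0" "d = \<beta> + y" "e = 1 + \<gamma>*y"
  shows "((\<gamma>*\<beta>-1)/d^2*y1)/(e/d) = (\<gamma>*\<beta>-1)*y/(d*e) * (y1/y)"
  using assms(1-3) by (simp add: field_simps power2_eq_square)

lemma ident1b:
  fixes \<beta> \<gamma> y y1 y2 d e :: real
  assumes "y \<noteq> 0" "d \<noteq> 0" "e \<noteq> 0" "d = \<beta> + y" "e = 1 + \<gamma>*y"
  shows "((-2*(\<gamma>*\<beta>-1)/d^3*y1^2 + (\<gamma>*\<beta>-1)/d^2*y2)*(e/d) - ((\<gamma>*\<beta>-1)/d^2*y1)^2)/(e/d)^2 = (\<gamma>*\<beta>-1)*(\<beta>-\<gamma>*y^2)/(d^2*e^2) * y * (y1/y)^2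
          + (\<gamma>*\<beta>-1)*y/(d*e) * ((y2*y - y1^2)/y^2)"
  using assms(1-3) apply (simp add: field_simps power2_eq_square power3_eq_cube)
  using assms(4,5) by algebra

lemma ident2:
  fixes l R R1 R2 Q Q1 Q2 :: real
  assumes "l \<noteq> 0" "R \<noteq> 0" "Q \<noteq> 0"
  shows "(R*Q + l*R1*Q + l*R*Q1)/(l*R*Q) = 1/l + R1/R + Q1/Q"
    and "((2*R1*Q + 2*R*Q1 + l*R2*Q + 2*l*R1*Q1 + l*R*Q2)*(l*R*Q) - (R*Q + l*R1*Q + l*R*Q1)^2)/(l*R*Q)^2
        = -1/l^2 + (R2*R - R1^2)/R^2 + (Q2*Q - Q1^2)/Q^2"
  using assms by (simp_all add: field_simps power2_eq_square)

lemma dy_lemma: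
  fixes R R1 R2 Q Q1 Q2 :: "real \<Rightarrow> real"
  assumes dR: "(R has_real_derivative R1 x) (at x within S)" and dR1: "(R1 has_real_derivative R2 x) (at x within S)"
  and dQ: "(Q has_real_derivative Q1 x) (at x within S)" and dQ1: "(Q1 has_real_derivative Q2 x) (at x within S)"
  shows "((\<lambda>l. l * R l * Q l) has_real_derivative (R x * Q x + x * R1 x * Q x + x * R x * Q1 x)) (at x within S)"
   and "((\<lambda>l. R l * Q l + l * R1 l * Q l + l * R l * Q1 l) has_real_derivative 
      (2*R1 x*Q x + 2*R x*Q1 x + x*R2 x*Q x + 2*x*R1 x*Q1 x + x*R x*Q2 x)) (at x within S)"
  apply (rule derivative_eq_intros dR dQ refl)+ apply (simp add: algebra_simps)
  apply (rule derivative_eq_intros dR dQ dR1 dQ1 refl)+ apply (simp add: algebra_simps)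
  done

lemma dQn_lemma:
  fixes y :: "real \<Rightarrow> real"
  assumes dy: "(y has_real_derivative y1) (at x within S)" and nz: "\<beta> + y x \<noteq> 0"
  shows "((\<lambda>l. (1+\<gamma>*y l)/(\<beta>+y l)) has_real_derivative (\<gamma>*\<beta>-1)/(\<beta>+y x)^2*y1) (at x within S)"
  apply (rule derivative_eq_intros dy refl nz)+ using nz apply (simp add: field_simps power2_eq_square)
  done

lemma dQn1_lemma:
  fixes y :: "real \<Rightarrow> real"
  assumes dy: "(y has_real_derivative y1 x) (at x within S)" and dy1: "(y1 has_real_derivative y2) (at x within S)" and nz: "\<beta> + y x \<noteq> 0"
  shows "((\<lambda>l. (\<gamma>*\<beta>-1)/(\<beta>+y l)^2*y1 l) has_real_derivative -2*(\<gamma>*\<beta>-1)/(\<beta>+y x)^3*(y1 x)^2 + (\<gamma>*\<beta>-1)/(\<beta>+y x)^2*y2) (at x within S)"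
proof -
  define d where "d = \<beta> + y x"
  have "d \<noteq> 0" using nz d_def by simp
  show ?thesis
  apply (rule derivative_eq_intros dy dy1 refl | (simp add: nz; fail))+
  unfolding d_def[symmetric] using \<open>d \<noteq> 0\<close> apply (simp add: field_simps power2_eq_square power3_eq_cube)
  done
qed

definition good :: "real \<Rightarrow> real \<Rightarrow> real \<Rightarrow> real \<Rightarrow> real \<Rightarrow> real \<Rightarrow> real \<Rightarrow> real \<Rightarrow> (real \<Rightarrow> real) \<Rightarrow> bool" where
  "good \<beta> \<gamma> a b m M K1 K2 Q \<longleftrightarrow> (\<exists>Q1 Q2. \<forall>x\<in>{a..b}. (Q has_real_derivative Q1 x) (at x within {a..b})
     \<and> (Q1 has_real_derivative Q2 x) (at x within {a..b}) \<and> in_range \<beta> \<gamma> (Q x) \<and> m \<le> Q x \<and> Q x \<le> M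
     \<and> \<bar>Q1 x / Q x\<bar> \<le> K1 \<and> \<bar>(Q2 x * Q x - (Q1 x)^2)/(Q x)^2\<bar> \<le> K2)"

lemma step_lemma:
  fixes \<beta> \<gamma> a b m M K1 K2 r1 r2 C1 C2 c D :: real and R R1 R2 Q :: "real \<Rightarrow> real"
  assumes par: "\<beta> \<ge> 0" "\<gamma> \<ge> 0" "\<beta>*\<gamma> < 1" "0 < a" "0 < r1" "0 < m"
  and Rp: "\<And>x. x \<in> {a..b} \<Longrightarrow> (R has_real_derivative R1 x) (at x within {a..b}) \<and> (R1 has_real_derivative R2 x) (at x within {a..b})
            \<and> r1 \<le> R x \<and> R x \<le> r2 \<and> \<bar>R1 x\<bar> \<le> C1 \<and> \<bar>R2 x\<bar> \<le> C2"
  and gQ: "good \<beta> \<gamma> a b m M K1 K2 Q"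
  and cb: "\<And>y. a*r1*m \<le> y \<Longrightarrow> y \<le> b*r2*M \<Longrightarrow> \<bar>(\<gamma>*\<beta>-1)*y/((\<beta>+y)*(1+\<gamma>*y))\<bar> \<le> c"
  and Db: "\<And>y. a*r1*m \<le> y \<Longrightarrow> y \<le> b*r2*M \<Longrightarrow> \<bar>(\<gamma>*\<beta>-1)*(\<beta>-\<gamma>*y^2)/((\<beta>+y)^2*(1+\<gamma>*y)^2)\<bar> \<le> D"
  and K1b: "c*(1/a + C1/r1 + K1) \<le> K1"
  and K2b: "D*(b*r2*M)*(1/a + C1/r1 + K1)^2 + c*(1/a^2 + (C2/r1 + (C1/r1)^2) + K2) \<le> K2"
  and mb1: "\<beta> > 0 \<Longrightarrow> m \<le> (1+\<gamma>*(b*r2/\<beta>))/(\<beta>+b*r2/\<beta>)"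
  and mb0: "\<beta> = 0 \<Longrightarrow> m \<le> \<gamma>"
  and Mb: "(1+\<gamma>*(a*r1*m))/(\<beta>+a*r1*m) \<le> M"
  shows "good \<beta> \<gamma> a b m M K1 K2 (\<lambda>l. (1 + \<gamma>*l*R l*Q l)/(\<beta> + l*R l*Q l))"
proof -
  obtain Q1 Q2 where Qp: "\<And>x. x\<in>{a..b} \<Longrightarrow> (Q has_real_derivative Q1 x) (at x within {a..b})
     \<and> (Q1 has_real_derivative Q2 x) (at x within {a..b}) \<and> in_range \<beta> \<gamma> (Q x) \<and> m \<le> Q x \<and> Q x \<le> M
     \<and> \<bar>Q1 x / Q x\<bar> \<le> K1 \<and> \<bar>(Q2 x * Q x - (Q1 x)^2)/(Q x)^2\<bar> \<le> K2"
    using gQ unfolding good_def by blast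
  define y where "y = (\<lambda>l. l * R l * Q l)"
  define y1 where "y1 = (\<lambda>l. R l * Q l + l * R1 l * Q l + l * R l * Q1 l)"
  define y2 where "y2 = (\<lambda>l. 2*R1 l*Q l + 2*R l*Q1 l + l*R2 l*Q l + 2*l*R1 l*Q1 l + l*R l*Q2 l)"
  define Qn where "Qn = (\<lambda>l. (1 + \<gamma>*y l)/(\<beta> + y l))"
  define Qn1 where "Qn1 = (\<lambda>l. (\<gamma>*\<beta>-1)/(\<beta>+y l)^2*y1 l)"
  define Qn2 where "Qn2 = (\<lambda>l. -2*(\<gamma>*\<beta>-1)/(\<beta>+y l)^3*(y1 l)^2 + (\<gamma>*\<beta>-1)/(\<beta>+y l)^2*y2 l)"
  have eq: "(\<lambda>l. (1 + \<gamma>*l*R l*Q l)/(\<beta> + l*R l*Q l)) = Qn" by (simp add: Qn_def y_def mult.assoc)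
  show ?thesis unfolding eq good_def
  proof (rule exI[of _ Qn1], rule exI[of _ Qn2], intro ballI conjI)
    fix x assume x: "x \<in> {a..b}"
    note R = Rp[OF x] and Qx = Qp[OF x]
    have ax: "a \<le> x" "x \<le> b" "0 < x" using x par by auto
    have r: "0 < R x" "r1 \<le> R x" "R x \<le> r2" using R par by auto
    have q: "0 < Q x" "m \<le> Q x" "Q x \<le> M" using Qx par by auto
    have yx: "y x = x * R x * Q x" by (simp add: y_def)
    have ylo: "a*r1*m \<le> y x" unfolding yx
      by (intro mult_mono) (use ax r q par in auto)
    have yhi: "y x \<le> b*r2*M" unfolding yx
      by (intro mult_mono) (use ax r q par in auto)
    have ypos: "y x > 0" using ylo par by (smt (verit) mult_pos_pos)
    have dpos: "\<beta> + y x > 0" using ypos par by simp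
    have epos: "1 + \<gamma> * y x > 0" using ypos par by (smt (verit) mult_nonneg_nonneg)
    have dy: "(y has_real_derivative y1 x) (at x within {a..b})"
      unfolding y_def y1_def using dy_lemma(1) R Qx by blast
    have dy1: "(y1 has_real_derivative y2 x) (at x within {a..b})"
      unfolding y2_def y1_def using dy_lemma(2) R Qx by blast
    show "(Qn has_real_derivative Qn1 x) (at x within {a..b})"
      unfolding Qn_def Qn1_def using dQn_lemma[OF dy] dpos by simp
    show "(Qn1 has_real_derivative Qn2 x) (at x within {a..b})"
      unfolding Qn1_def Qn2_def using dQn1_lemma[OF dy dy1] dpos by simp
    show "in_range \<beta> \<gamma> (Qn x)"
    proof -
      have "\<gamma> < Qn x" unfolding Qn_def using dpos par
        by (simp add: field_simps)
      moreover have "\<beta> = 0 \<or> Qn x < 1/\<beta>"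
      proof (cases "\<beta> = 0")
        case False
        then have "\<beta> > 0" using par by simp
        have "\<beta>*(\<gamma> * y x) < y x" using par ypos by (smt (verit) mult_less_cancel_right2 mult.assoc mult.commute)
        then show ?thesis unfolding Qn_def using dpos \<open>\<beta>>0\<close> by (simp add: field_simps)
      qed simp
      ultimately show ?thesis unfolding in_range_def by simp
    qed
    show "m \<le> Qn x"
    proof (cases "\<beta> = 0")
      case True
      then have "Qn x = 1 / y x + \<gamma>" unfolding Qn_def using ypos by (simp add: field_simps)
      then show ?thesis using mb0 True ypos by (smt (verit) divide_pos_pos)
    next
      case False
      then have bp: "\<beta> > 0" using par by simp
      have "Q x < 1/\<beta>" using Qx False unfolding in_range_def by simp
      then have "y x \<le> b*r2/\<beta>" unfolding yx
      proof -
        have "x * R x * Q x \<le> b * r2 * Q x" by (intro mult_mono) (use ax r q in auto)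
        also have "\<dots> \<le> b * r2 * (1/\<beta>)" using \<open>Q x < 1/\<beta>\<close> ax r par
          by (intro mult_left_mono) auto
        finally show "x * R x * Q x \<le> b*r2/\<beta>" by simp
      qed
      then have "(1+\<gamma>*(b*r2/\<beta>))/(\<beta>+b*r2/\<beta>) \<le> Qn x" unfolding Qn_def
        using f_mono[of \<beta> \<gamma> "y x" "b*r2/\<beta>"] par ypos by simp
      then show ?thesis using mb1 bp by simp
    qed
    show "Qn x \<le> M"
      unfolding Qn_def using f_mono[of \<beta> \<gamma> "a*r1*m" "y x"] par ylo Mb by (simp add: mult_pos_pos)
    define Y1 where "Y1 = y1 x / y x"
    define Y2 where "Y2 = (y2 x * y x - (y1 x)^2)/(y x)^2"
    define phi where "phi = (\<gamma>*\<beta>-1)*y x/((\<beta>+y x)*(1+\<gamma>*y x))"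
    define phi' where "phi' = (\<gamma>*\<beta>-1)*(\<beta>-\<gamma>*(y x)^2)/((\<beta>+y x)^2*(1+\<gamma>*y x)^2)"
    have Y1e: "Y1 = 1/x + R1 x/R x + Q1 x/Q x"
      unfolding Y1_def y1_def y_def by (rule ident2(1)) (use ax r q in auto)
    have Y2e: "Y2 = -1/x^2 + (R2 x*R x - (R1 x)^2)/(R x)^2 + (Q2 x*Q x - (Q1 x)^2)/(Q x)^2"
      unfolding Y2_def y2_def y1_def y_def by (rule ident2(2)) (use ax r q in auto)
    have b1: "\<bar>1/x\<bar> \<le> 1/a" using ax par by (simp add: frac_le)
    have b2: "\<bar>R1 x/R x\<bar> \<le> C1/r1"
    proof -
      have "\<bar>R1 x/R x\<bar> = \<bar>R1 x\<bar>/R x" using r by simp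
      also have "\<dots> \<le> C1/r1" using R r par by (intro frac_le) auto
      finally show ?thesis .
    qed
    have b3: "\<bar>-1/x^2\<bar> \<le> 1/a^2" using ax par by (simp add: frac_le power_mono)
    have b4: "\<bar>(R2 x*R x - (R1 x)^2)/(R x)^2\<bar> \<le> C2/r1 + (C1/r1)^2"
    proof -
      have eqR: "(R2 x*R x - (R1 x)^2)/(R x)^2 = R2 x/R x - (R1 x/R x)^2" using r by (simp add: field_simps power2_eq_square)
      have aux: "\<bar>u - v^2\<bar> \<le> \<bar>u\<bar> + \<bar>v\<bar>^2" for u v :: real
      proof -
        have "\<bar>u - v^2\<bar> \<le> \<bar>u\<bar> + \<bar>v^2\<bar>" by (rule abs_triangle_ineq4)
        thus ?thesis by simp
      qed
      have "\<bar>(R2 x*R x - (R1 x)^2)/(R x)^2\<bar> \<le> \<bar>R2 x/R x\<bar> + \<bar>R1 x/R x\<bar>^2"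
        unfolding eqR by (rule aux)
      moreover have "\<bar>R2 x/R x\<bar> \<le> C2/r1"
      proof -
        have "\<bar>R2 x/R x\<bar> = \<bar>R2 x\<bar>/R x" using r by simp
        also have "\<dots> \<le> C2/r1" using R r par by (intro frac_le) auto
        finally show ?thesis .
      qed
      moreover have "\<bar>R1 x/R x\<bar>^2 \<le> (C1/r1)^2" using b2 by (intro power_mono) auto
      ultimately show ?thesis by linarith
    qed
    have hY1: "\<bar>Y1\<bar> \<le> 1/a + C1/r1 + K1" unfolding Y1e using b1 b2 Qx by linarith
    have hY2: "\<bar>Y2\<bar> \<le> 1/a^2 + (C2/r1 + (C1/r1)^2) + K2" unfolding Y2e using b3 b4 Qx by linarith
    have hphi: "\<bar>phi\<bar> \<le> c" unfolding phi_def using cb ylo yhi by blast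
    have hphi': "\<bar>phi'\<bar> \<le> D" unfolding phi'_def using Db ylo yhi by blast
    have c0: "0 \<le> c" using hphi abs_ge_zero[of phi] by linarith
    have e1: "Qn1 x / Qn x = phi * Y1" unfolding Qn1_def Qn_def phi_def Y1_def
      by (rule ident1a) (use ypos dpos epos in auto)
    have e2: "(Qn2 x * Qn x - (Qn1 x)^2)/(Qn x)^2 = phi' * y x * Y1^2 + phi * Y2"
      unfolding Qn1_def Qn_def Qn2_def phi_def phi'_def Y1_def Y2_def
      by (rule ident1b) (use ypos dpos epos in auto)
    have "\<bar>phi * Y1\<bar> \<le> c * (1/a + C1/r1 + K1)" unfolding abs_mult
      by (intro mult_mono hphi hY1) (use c0 in auto)
    then show "\<bar>Qn1 x / Qn x\<bar> \<le> K1" using e1 K1b by simp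
    have sq: "\<bar>Y1\<bar>^2 \<le> (1/a + C1/r1 + K1)^2" by (rule power_mono[OF hY1]) simp
    have ae: "\<bar>phi' * y x * Y1^2\<bar> = \<bar>phi'\<bar> * y x * \<bar>Y1\<bar>^2" using ypos by (simp add: abs_mult power_abs)
    have pm: "\<bar>phi'\<bar> * y x \<le> D*(b*r2*M)" using hphi' yhi ypos by (intro mult_mono) auto
    have nn: "0 \<le> D*(b*r2*M)"
      by (rule order_trans[OF _ pm]) (use ypos in simp)
    have "\<bar>phi' * y x * Y1^2\<bar> \<le> D*(b*r2*M)*(1/a + C1/r1 + K1)^2" unfolding ae
      by (rule mult_mono[OF pm sq nn]) simp
    moreover have "\<bar>phi * Y2\<bar> \<le> c*(1/a^2 + (C2/r1 + (C1/r1)^2) + K2)" unfolding abs_mult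
      by (intro mult_mono hphi hY2) (use c0 in auto)
    moreover have "\<bar>phi' * y x * Y1^2 + phi * Y2\<bar> \<le> \<bar>phi' * y x * Y1^2\<bar> + \<bar>phi * Y2\<bar>"
      by (rule abs_triangle_ineq)
    ultimately show "\<bar>(Qn2 x * Qn x - (Qn1 x)^2)/(Qn x)^2\<bar> \<le> K2" unfolding e2 using K2b
      by linarith
  qed
qed



lemma phi_bound:
  fixes \<beta> \<gamma> y ylo yhi :: real
  assumes "\<beta> \<ge> 0" "\<gamma> \<ge> 0" "\<beta>*\<gamma> < 1" "0 < ylo" "ylo \<le> y" "y \<le> yhi"
  shows "\<bar>(\<gamma>*\<beta>-1)*y/((\<beta>+y)*(1+\<gamma>*y))\<bar> \<le> 1 - (\<beta>+\<gamma>*ylo^2)/((\<beta>+yhi)*(1+\<gamma>*yhi))"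
proof -
  define P where "P = (\<beta>+y)*(1+\<gamma>*y)"
  define Pm where "Pm = (\<beta>+yhi)*(1+\<gamma>*yhi)"
  define N where "N = \<beta>+\<gamma>*ylo^2"
  have y0: "0 < y" using assms by linarith
  have gy: "0 \<le> \<gamma>*y" using assms y0 by simp
  have P0: "P > 0" unfolding P_def using assms y0 gy by (intro mult_pos_pos) linarith+
  have N0: "N \<ge> 0" unfolding N_def using assms by simp
  have PPm: "P \<le> Pm" unfolding P_def Pm_def using assms y0 gy
    by (intro mult_mono add_left_mono mult_left_mono) auto
  have a1: "\<bar>(\<gamma>*\<beta>-1)*y/P\<bar> = (1-\<gamma>*\<beta>)*y/P" using assms y0 P0
    by (simp add: abs_div abs_mult mult.commute)
  have a2: "(1-\<gamma>*\<beta>)*y/P = 1 - (P - (1-\<gamma>*\<beta>)*y)/P" using P0 by (simp add: field_simps)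
  have a3: "P - (1-\<gamma>*\<beta>)*y = \<beta> + 2*\<beta>*\<gamma>*y + \<gamma>*y^2" unfolding P_def by (simp add: algebra_simps power2_eq_square)
  have "\<gamma>*ylo^2 \<le> \<gamma>*y^2" using assms by (intro mult_left_mono power_mono) auto
  moreover have "0 \<le> 2*\<beta>*\<gamma>*y" using assms y0 by simp
  ultimately have a4: "N \<le> P - (1-\<gamma>*\<beta>)*y" unfolding a3 N_def by linarith
  have "N/Pm \<le> N/P" using N0 P0 PPm by (intro divide_left_mono) auto
  also have "\<dots> \<le> (P - (1-\<gamma>*\<beta>)*y)/P" using a4 P0 by (intro divide_right_mono) auto
  finally have "N/Pm \<le> (P - (1-\<gamma>*\<beta>)*y)/P" .
  then show ?thesis using a1 a2 unfolding P_def[symmetric] Pm_def[symmetric] N_def[symmetric] by linarith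
qed

lemma phi'_bound:
  fixes \<beta> \<gamma> y ylo yhi :: real
  assumes "\<beta> \<ge> 0" "\<gamma> \<ge> 0" "\<beta>*\<gamma> < 1" "0 < ylo" "ylo \<le> y" "y \<le> yhi"
  shows "\<bar>(\<gamma>*\<beta>-1)*(\<beta>-\<gamma>*y^2)/((\<beta>+y)^2*(1+\<gamma>*y)^2)\<bar> \<le> (\<beta>+\<gamma>*yhi^2)/ylo^2"
proof -
  have y0: "0 < y" using assms by linarith
  have gy: "0 \<le> \<gamma>*y" using assms y0 by simp
  have n1: "\<bar>(\<gamma>*\<beta>-1)*(\<beta>-\<gamma>*y^2)\<bar> \<le> \<bar>\<beta>-\<gamma>*y^2\<bar>"
  proof -
    have "\<bar>\<gamma>*\<beta>-1\<bar> \<le> 1" using assms by (simp add: mult.commute)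
    then show ?thesis unfolding abs_mult using mult_right_mono[of "\<bar>\<gamma>*\<beta>-1\<bar>" 1 "\<bar>\<beta>-\<gamma>*y^2\<bar>"] by simp
  qed
  have "\<gamma>*y^2 \<le> \<gamma>*yhi^2" using assms y0 by (intro mult_left_mono power_mono) auto
  moreover have "0 \<le> \<gamma>*y^2" using assms by simp
  ultimately have n2: "\<bar>(\<gamma>*\<beta>-1)*(\<beta>-\<gamma>*y^2)\<bar> \<le> \<beta>+\<gamma>*yhi^2" using n1 assms by linarith
  have d1: "y^2 \<le> (\<beta>+y)^2" using assms y0 by (intro power_mono) auto
  have d2: "1 \<le> (1+\<gamma>*y)^2" using gy one_le_power[of "1+\<gamma>*y" 2] by linarith
  have "ylo^2 \<le> y^2" using assms by (intro power_mono) auto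
  also have "\<dots> \<le> (\<beta>+y)^2*(1+\<gamma>*y)^2" using d1 d2 mult_mono[OF d1 d2] by simp
  finally have d3: "ylo^2 \<le> (\<beta>+y)^2*(1+\<gamma>*y)^2" .
  have "\<bar>(\<gamma>*\<beta>-1)*(\<beta>-\<gamma>*y^2)/((\<beta>+y)^2*(1+\<gamma>*y)^2)\<bar> = \<bar>(\<gamma>*\<beta>-1)*(\<beta>-\<gamma>*y^2)\<bar>/((\<beta>+y)^2*(1+\<gamma>*y)^2)"
    by (simp add: abs_div)
  also have "\<dots> \<le> (\<beta>+\<gamma>*yhi^2)/ylo^2" using n2 d3 assms by (intro frac_le) auto
  finally show ?thesis .
qed
theorem lemma3p13:
  fixes \<beta> \<gamma> a b :: real and k :: nat and R :: "nat \<Rightarrow> real \<Rightarrow> real" and Q0 :: "real \<Rightarrow> real"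
  assumes "antiferromagnetic \<beta> \<gamma>"
    and "0 < a" and "a \<le> b"
    and "k \<ge> 1"
    and "\<And>j. j \<in> {1..k} \<Longrightarrow> C2_on {a..b} (R j)"
    and "\<And>j x. j \<in> {1..k} \<Longrightarrow> x \<in> {a..b} \<Longrightarrow> in_range \<beta> \<gamma> (R j x)"
    and "C2_on {a..b} Q0"
    and "\<And>x. x \<in> {a..b} \<Longrightarrow> in_range \<beta> \<gamma> (Q0 x)"
  shows "\<exists>c1 d1 c2 d2. \<forall>Q\<in>fam \<beta> \<gamma> k R Q0. \<exists>Q1 Q2. \<forall>x\<in>{a..b}.
            (Q has_real_derivative Q1 x) (at x within {a..b})
          \<and> (Q1 has_real_derivative Q2 x) (at x within {a..b})
          \<and> Q1 x \<in> {c1..d1} \<and> Q2 x \<in> {c2..d2}"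
proof -
  have par: "\<beta> \<ge> 0" "\<gamma> \<ge> 0" "\<beta>*\<gamma> < 1" "\<beta> \<noteq> 0 \<or> \<gamma> \<noteq> 0"
    using assms(1) unfolding antiferromagnetic_def by auto
  note ab = assms(2,3)
  have "\<forall>j\<in>{1..k}. \<exists>f1 f2. (\<forall>x\<in>{a..b}. (R j has_real_derivative f1 x) (at x within {a..b})
        \<and> (f1 has_real_derivative f2 x) (at x within {a..b})) \<and> continuous_on {a..b} f2"
    using assms(5) unfolding C2_on_def by blast
  from bchoice[OF this] obtain R1 where "\<forall>j\<in>{1..k}. \<exists>f2. (\<forall>x\<in>{a..b}. (R j has_real_derivative R1 j x) (at x within {a..b})
        \<and> (R1 j has_real_derivative f2 x) (at x within {a..b})) \<and> continuous_on {a..b} f2" by blast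
  from bchoice[OF this] obtain R2 where hR: "\<forall>j\<in>{1..k}. (\<forall>x\<in>{a..b}. (R j has_real_derivative R1 j x) (at x within {a..b})
        \<and> (R1 j has_real_derivative R2 j x) (at x within {a..b})) \<and> continuous_on {a..b} (R2 j)" by blast
  have contR: "continuous_on {a..b} (R j)" "continuous_on {a..b} (R1 j)" "continuous_on {a..b} (R2 j)"
    if "j \<in> {1..k}" for j
    using hR that deriv_cont[of "{a..b}" "R j" "R1 j"] deriv_cont[of "{a..b}" "R1 j" "R2 j"] by auto
  have Rpos: "0 < R j x" if "j \<in> {1..k}" "x \<in> {a..b}" for j x
    using assms(6)[OF that] par unfolding in_range_def by linarith
  have "\<exists>e>0. \<forall>j\<in>{1..k}. \<forall>x\<in>{a..b}. e \<le> R j x"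
  proof (rule finite_pos)
    show "\<forall>j\<in>{1..k}. \<exists>e>0. \<forall>x\<in>{a..b}. e \<le> R j x"
    proof
      fix j assume j: "j \<in> {1..k}"
      from pos_min[OF contR(1)[OF j] ab(2), of 0] Rpos[OF j] show "\<exists>e>0. \<forall>x\<in>{a..b}. e \<le> R j x" by auto
    qed
  qed simp
  then obtain r1 where r1: "r1 > 0" "\<And>j x. j\<in>{1..k} \<Longrightarrow> x\<in>{a..b} \<Longrightarrow> r1 \<le> R j x" by blast
  have "\<exists>B. \<forall>j\<in>{1..k}. \<forall>x\<in>{a..b}. R j x \<le> B"
    proof (rule finite_bound)
    show "\<forall>j\<in>{1..k}. \<exists>B. \<forall>x\<in>{a..b}. R j x \<le> B"
    proof
      fix j assume j: "j\<in>{1..k}"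
      obtain B where "\<forall>x\<in>{a..b}. \<bar>R j x\<bar> \<le> B" using cont_bound[OF contR(1)[OF j]] by blast
      then show "\<exists>B. \<forall>x\<in>{a..b}. R j x \<le> B" by (meson abs_le_D1)
    qed
  qed simp
  then obtain r2 where r2: "\<And>j x. j\<in>{1..k} \<Longrightarrow> x\<in>{a..b} \<Longrightarrow> R j x \<le> r2" by blast
  have "\<exists>B. \<forall>j\<in>{1..k}. \<forall>x\<in>{a..b}. \<bar>R1 j x\<bar> \<le> B"
    proof (rule finite_bound)
    show "\<forall>j\<in>{1..k}. \<exists>B. \<forall>x\<in>{a..b}. \<bar>R1 j x\<bar> \<le> B"
    proof
      fix j assume j: "j\<in>{1..k}"
      obtain B where "\<forall>x\<in>{a..b}. \<bar>R1 j x\<bar> \<le> B" using cont_bound[OF contR(2)[OF j]] by blast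
      then show "\<exists>B. \<forall>x\<in>{a..b}. \<bar>R1 j x\<bar> \<le> B" by blast
    qed
  qed simp
  then obtain C1 where C1: "\<And>j x. j\<in>{1..k} \<Longrightarrow> x\<in>{a..b} \<Longrightarrow> \<bar>R1 j x\<bar> \<le> C1" by blast
  have "\<exists>B. \<forall>j\<in>{1..k}. \<forall>x\<in>{a..b}. \<bar>R2 j x\<bar> \<le> B"
    proof (rule finite_bound)
    show "\<forall>j\<in>{1..k}. \<exists>B. \<forall>x\<in>{a..b}. \<bar>R2 j x\<bar> \<le> B"
    proof
      fix j assume j: "j\<in>{1..k}"
      obtain B where "\<forall>x\<in>{a..b}. \<bar>R2 j x\<bar> \<le> B" using cont_bound[OF contR(3)[OF j]] by blast
      then show "\<exists>B. \<forall>x\<in>{a..b}. \<bar>R2 j x\<bar> \<le> B" by blast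
    qed
  qed simp
  then obtain C2 where C2: "\<And>j x. j\<in>{1..k} \<Longrightarrow> x\<in>{a..b} \<Longrightarrow> \<bar>R2 j x\<bar> \<le> C2" by blast
  have "1 \<in> {1..k}" using assms(4) by simp
  have ab': "a \<in> {a..b}" using ab by simp
  have r2pos: "r2 > 0" using r1 r2[OF \<open>1 \<in> {1..k}\<close> ab'] Rpos[OF \<open>1 \<in> {1..k}\<close> ab'] by linarith
  obtain Q01 Q02 where hQ: "\<forall>x\<in>{a..b}. (Q0 has_real_derivative Q01 x) (at x within {a..b})
        \<and> (Q01 has_real_derivative Q02 x) (at x within {a..b})" "continuous_on {a..b} Q02"
    using assms(7) unfolding C2_on_def by blast
  have contQ: "continuous_on {a..b} Q0" "continuous_on {a..b} Q01"
    using hQ deriv_cont[of "{a..b}" Q0 Q01] deriv_cont[of "{a..b}" Q01 Q02] by auto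
  have Qpos: "0 < Q0 x" if "x \<in> {a..b}" for x
    using assms(8)[OF that] par unfolding in_range_def by linarith
  obtain m0 where m0: "m0 > 0" "\<And>x. x\<in>{a..b} \<Longrightarrow> m0 \<le> Q0 x"
    using pos_min[OF contQ(1) ab(2), of 0] Qpos by auto
  obtain M0 where M0: "\<And>x. x\<in>{a..b} \<Longrightarrow> \<bar>Q0 x\<bar> \<le> M0" using cont_bound[OF contQ(1)] by blast
  obtain B1 where B1: "\<And>x. x\<in>{a..b} \<Longrightarrow> \<bar>Q01 x\<bar> \<le> B1" using cont_bound[OF contQ(2)] by blast
  obtain B2 where B2: "\<And>x. x\<in>{a..b} \<Longrightarrow> \<bar>Q02 x\<bar> \<le> B2" using cont_bound[OF hQ(2)] by blast
  define m1 where "m1 = (if \<beta> > 0 then (1+\<gamma>*(b*r2/\<beta>))/(\<beta>+b*r2/\<beta>) else \<gamma>)"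
  define m where "m = min m0 m1"
  define M where "M = max M0 ((1+\<gamma>*(a*r1*m))/(\<beta>+a*r1*m))"
  define ylo where "ylo = a*r1*m"
  define yhi where "yhi = b*r2*M"
  define c where "c = 1 - (\<beta>+\<gamma>*ylo^2)/((\<beta>+yhi)*(1+\<gamma>*yhi))"
  define D where "D = (\<beta>+\<gamma>*yhi^2)/ylo^2"
  define A1 where "A1 = 1/a + C1/r1"
  define A2 where "A2 = 1/a^2 + (C2/r1 + (C1/r1)^2)"
  define K1 where "K1 = max (B1/m) (c*A1/(1-c))"
  define K2 where "K2 = max (B2/m + (B1/m)^2) ((D*yhi*(A1+K1)^2 + c*A2)/(1-c))"
  have m1pos: "m1 > 0"
  proof (cases "\<beta> > 0")
    case True
    have "0 < b*r2/\<beta>" using True ab r2pos by simp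
    have "0 \<le> \<gamma>*(b*r2/\<beta>)" using par \<open>0 < b*r2/\<beta>\<close> by (intro mult_nonneg_nonneg) auto
    then have "0 < 1+\<gamma>*(b*r2/\<beta>)" by linarith
    moreover have "0 < \<beta>+b*r2/\<beta>" using True \<open>0 < b*r2/\<beta>\<close> by simp
    ultimately show ?thesis unfolding m1_def using True by (simp only: if_True) (rule divide_pos_pos)
  next
    case False
    then show ?thesis unfolding m1_def using par by simp
  qed
  have mpos: "m > 0" unfolding m_def using m0 m1pos by simp
  have mm0: "m \<le> Q0 x" if "x \<in> {a..b}" for x using m0(2)[OF that] unfolding m_def by simp
  have ylo0: "ylo > 0" unfolding ylo_def using ab r1 mpos by simp
  have mM: "m \<le> M" unfolding M_def using mm0[OF ab'] M0[OF ab'] by simp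
  have yhi0: "yhi > 0" unfolding yhi_def using ab r2pos mM mpos by simp
  have cb: "\<bar>(\<gamma>*\<beta>-1)*y/((\<beta>+y)*(1+\<gamma>*y))\<bar> \<le> c" if "a*r1*m \<le> y" "y \<le> b*r2*M" for y
    unfolding c_def using phi_bound[of \<beta> \<gamma> ylo y yhi] par that ylo0 unfolding ylo_def yhi_def by simp
  have Db: "\<bar>(\<gamma>*\<beta>-1)*(\<beta>-\<gamma>*y^2)/((\<beta>+y)^2*(1+\<gamma>*y)^2)\<bar> \<le> D" if "a*r1*m \<le> y" "y \<le> b*r2*M" for y
    unfolding D_def using phi'_bound[of \<beta> \<gamma> ylo y yhi] par that ylo0 unfolding ylo_def yhi_def by simp
  have c1: "c < 1"
  proof -
    have g0: "0 \<le> \<gamma>*ylo^2" using par by simp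
    have "\<beta> > 0 \<or> \<gamma>*ylo^2 > 0" using par ylo0 by auto
    then have "0 < \<beta>+\<gamma>*ylo^2" using g0 par by linarith
    moreover have "0 < (\<beta>+yhi)*(1+\<gamma>*yhi)"
    proof -
      have "0 \<le> \<gamma>*yhi" using par yhi0 by simp
      then show ?thesis using par yhi0 by (intro mult_pos_pos) linarith+
    qed
    ultimately show ?thesis unfolding c_def by simp
  qed
  have K1b: "c*(1/a + C1/r1 + K1) \<le> K1"
  proof -
    have "c*A1/(1-c) \<le> K1" unfolding K1_def by simp
    then have "c*A1 \<le> K1*(1-c)" using c1 by (simp add: divide_le_eq)
    then show ?thesis unfolding A1_def by (simp add: algebra_simps)
  qed
  have K2b: "D*(b*r2*M)*(1/a + C1/r1 + K1)^2 + c*(1/a^2 + (C2/r1 + (C1/r1)^2) + K2) \<le> K2"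
  proof -
    have "(D*yhi*(A1+K1)^2 + c*A2)/(1-c) \<le> K2" unfolding K2_def by simp
    then have "D*yhi*(A1+K1)^2 + c*A2 \<le> K2*(1-c)" using c1 by (simp add: divide_le_eq)
    then show ?thesis unfolding A1_def A2_def yhi_def by (simp add: algebra_simps)
  qed
  have mb1: "m \<le> (1+\<gamma>*(b*r2/\<beta>))/(\<beta>+b*r2/\<beta>)" if "\<beta> > 0"
    using that unfolding m_def m1_def by simp
  have mb0: "m \<le> \<gamma>" if "\<beta> = 0" using that unfolding m_def m1_def by simp
  have Mb: "(1+\<gamma>*(a*r1*m))/(\<beta>+a*r1*m) \<le> M" unfolding M_def by simp
  have good_all: "good \<beta> \<gamma> a b m M K1 K2 Q" if "Q \<in> fam \<beta> \<gamma> k R Q0" for Q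
    using that
  proof (induction rule: fam.induct)
    case base
    show ?case unfolding good_def
    proof (rule exI[of _ Q01], rule exI[of _ Q02], intro ballI conjI)
      fix x assume x: "x \<in> {a..b}"
      show "(Q0 has_real_derivative Q01 x) (at x within {a..b})" "(Q01 has_real_derivative Q02 x) (at x within {a..b})"
        using hQ x by auto
      show "in_range \<beta> \<gamma> (Q0 x)" using assms(8) x by simp
      show "m \<le> Q0 x" using mm0 x by simp
      show "Q0 x \<le> M" using M0[OF x] unfolding M_def by simp
      have q: "0 < Q0 x" "m \<le> Q0 x" using mm0[OF x] mpos by auto
      have h1: "\<bar>Q01 x / Q0 x\<bar> \<le> B1/m"
      proof -
        have "\<bar>Q01 x / Q0 x\<bar> = \<bar>Q01 x\<bar> / Q0 x" using q by simp
        also have "\<dots> \<le> B1/m" using B1[OF x] q mpos by (intro frac_le) auto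
        finally show ?thesis .
      qed
      then show "\<bar>Q01 x / Q0 x\<bar> \<le> K1" unfolding K1_def by simp
      have h2: "\<bar>Q02 x / Q0 x\<bar> \<le> B2/m"
      proof -
        have "\<bar>Q02 x / Q0 x\<bar> = \<bar>Q02 x\<bar> / Q0 x" using q by simp
        also have "\<dots> \<le> B2/m" using B2[OF x] q mpos by (intro frac_le) auto
        finally show ?thesis .
      qed
      have eq: "(Q02 x * Q0 x - (Q01 x)^2)/(Q0 x)^2 = Q02 x / Q0 x - (Q01 x / Q0 x)^2"
        using q by (simp add: field_simps power2_eq_square)
      have "\<bar>Q02 x / Q0 x - (Q01 x / Q0 x)^2\<bar> \<le> \<bar>Q02 x / Q0 x\<bar> + \<bar>(Q01 x / Q0 x)^2\<bar>"
        by (rule abs_triangle_ineq4)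
      moreover have "\<bar>(Q01 x / Q0 x)^2\<bar> \<le> (B1/m)^2"
        using power_mono[OF h1, of 2] by (simp only: power2_abs abs_power2)
      ultimately have "\<bar>(Q02 x * Q0 x - (Q01 x)^2)/(Q0 x)^2\<bar> \<le> B2/m + (B1/m)^2" unfolding eq using h2 by linarith
      then show "\<bar>(Q02 x * Q0 x - (Q01 x)^2)/(Q0 x)^2\<bar> \<le> K2" unfolding K2_def by simp
    qed
  next
    case (step Q j)
    have Rp: "\<And>x. x \<in> {a..b} \<Longrightarrow> (R j has_real_derivative R1 j x) (at x within {a..b}) \<and> (R1 j has_real_derivative R2 j x) (at x within {a..b})
            \<and> r1 \<le> R j x \<and> R j x \<le> r2 \<and> \<bar>R1 j x\<bar> \<le> C1 \<and> \<bar>R2 j x\<bar> \<le> C2"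
      using hR step.hyps(2) r1 r2 C1 C2 by blast
    show ?case by (rule step_lemma[OF par(1) par(2) par(3) ab(1) r1(1) mpos Rp step.IH cb Db K1b K2b mb1 mb0 Mb])
  qed
  show ?thesis
  proof (rule exI[of _ "-(M*K1)"], rule exI[of _ "M*K1"], rule exI[of _ "-(M*(K2+K1^2))"],
      rule exI[of _ "M*(K2+K1^2)"], rule ballI)
    fix Q assume "Q \<in> fam \<beta> \<gamma> k R Q0"
    from good_all[OF this] obtain Q1 Q2 where hq: "\<And>x. x\<in>{a..b} \<Longrightarrow> (Q has_real_derivative Q1 x) (at x within {a..b})
     \<and> (Q1 has_real_derivative Q2 x) (at x within {a..b}) \<and> in_range \<beta> \<gamma> (Q x) \<and> m \<le> Q x \<and> Q x \<le> M
     \<and> \<bar>Q1 x / Q x\<bar> \<le> K1 \<and> \<bar>(Q2 x * Q x - (Q1 x)^2)/(Q x)^2\<bar> \<le> K2"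
      unfolding good_def by blast
    show "\<exists>Q1 Q2. \<forall>x\<in>{a..b}. (Q has_real_derivative Q1 x) (at x within {a..b})
          \<and> (Q1 has_real_derivative Q2 x) (at x within {a..b})
          \<and> Q1 x \<in> {- (M*K1)..M*K1} \<and> Q2 x \<in> {- (M*(K2+K1^2))..M*(K2+K1^2)}"
    proof (rule exI[of _ Q1], rule exI[of _ Q2], intro ballI conjI)
      fix x assume x: "x \<in> {a..b}"
      note h = hq[OF x]
      show "(Q has_real_derivative Q1 x) (at x within {a..b})" "(Q1 has_real_derivative Q2 x) (at x within {a..b})"
        using h by auto
      have q: "0 < Q x" "Q x \<le> M" using h mpos by auto
      define L where "L = Q1 x / Q x"
      define L2 where "L2 = (Q2 x * Q x - (Q1 x)^2)/(Q x)^2"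
      have hL: "\<bar>L\<bar> \<le> K1" "\<bar>L2\<bar> \<le> K2" using h unfolding L_def L2_def by auto
      have e1: "Q1 x = L * Q x" unfolding L_def using q by simp
      have e2: "Q2 x = L2 * Q x + L^2 * Q x" unfolding L_def L2_def using q
        by (simp add: field_simps power2_eq_square)
      have "\<bar>Q1 x\<bar> \<le> K1 * M" unfolding e1 abs_mult using q hL by (intro mult_mono) auto
      then show "Q1 x \<in> {- (M*K1)..M*K1}" by (simp add: abs_le_iff mult.commute)
      have "\<bar>L2 * Q x\<bar> \<le> K2 * M" unfolding abs_mult using q hL by (intro mult_mono) auto
      moreover have "\<bar>L^2 * Q x\<bar> \<le> K1^2 * M"
      proof -
        have "L^2 \<le> K1^2" using power_mono[OF hL(1), of 2] by simp
        then show ?thesis unfolding abs_mult using q by (intro mult_mono) auto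
      qed
      moreover have "\<bar>Q2 x\<bar> \<le> \<bar>L2 * Q x\<bar> + \<bar>L^2 * Q x\<bar>" unfolding e2 by (rule abs_triangle_ineq)
      ultimately have "\<bar>Q2 x\<bar> \<le> M*(K2+K1^2)" by (simp add: algebra_simps)
      then show "Q2 x \<in> {- (M*(K2+K1^2))..M*(K2+K1^2)}" by (simp add: abs_le_iff)
    qed
  qed
qed

end
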